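(* Let $d>0$, $a\geq 7$ be integers with $\gcd(a,d)=1$ and let $\Gamma_4=\langle a,\,2a+d,\,3a+3d,\,4a+6d\rangle$. For each $1\leq i\leq a-1$ write $i=6\mu_i+q_i$ with $0\leq q_i<6$, and set $(\nu_i,\xi_i)=(1,q_i-3)$ if $q_i\geq 3$ and $(\nu_i,\xi_i)=(0,q_i)$ if $q_i<3$. Then $$\mathrm{Ap}(\Gamma_4,a)=\{0\}\cup\{(4\mu_i+3\nu_i+2\xi_i)a+id \mid 1\leq i\leq a-1\}.$$
   Context: For a numerical semigroup $\Gamma$ and nonzero $a\in\Gamma$, the Apéry set is $\mathrm{Ap}(\Gamma,a)=\{s\in\Gamma\mid s-a\notin\Gamma\}$. *)

theory Defs
  imports Main
begin

inductive_set gen_semigroup :: "nat set \<Rightarrow> nat set" for G :: "nat set" where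
  zero: "0 \<in> gen_semigroup G"
| add: "s \<in> gen_semigroup G \<Longrightarrow> g \<in> G \<Longrightarrow> s + g \<in> gen_semigroup G"

definition apery :: "nat set \<Rightarrow> nat \<Rightarrow> nat set" where
  "apery S a = {s \<in> S. \<not> (s \<ge> a \<and> s - a \<in> S)}"

end

theory Submission
  imports Defs
begin

definition hh :: "nat \<Rightarrow> nat" where
  "hh i = 4 * (i div 6) + 3 * (if i mod 6 \<ge> 3 then 1 else 0)
              + 2 * (if i mod 6 \<ge> 3 then i mod 6 - 3 else i mod 6)"
lemma hh_m: "hh (6*m + r) = 4*m + hh r" if "r < 6" unfolding hh_def using that by auto
lemma hh_form: "r < 6 \<Longrightarrow> hh r = (if 3 \<le> r then 2*r - 3 else 2*r)"
  unfolding hh_def by auto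
lemma hh_cases: obtains m r where "j = 6*m + r" "r < 6" "hh j = 4*m + hh r"
  using hh_m[of "j mod 6" "j div 6"] by (metis div_mult_mod_eq mult.commute mod_less_divisor zero_less_numeral)
lemma hh_shift: assumes "j = 6*m + r" "r < 6" shows "hh j = 4*m + (if 3 \<le> r then 2*r - 3 else 2*r)"
  using hh_m[OF assms(2), of m] hh_form[OF assms(2)] assms(1) by simp
lemma hh_step6: "hh (j+6) = hh j + 4"
proof -
  obtain m r where mr: "j = 6*m + r" "r < 6" by (rule hh_cases)
  have "j + 6 = 6*(m+1) + r" using mr by simp
  from hh_shift[OF this mr(2)] hh_shift[OF mr] show ?thesis by simp
qed
lemma hh_step1: "hh (j+1) \<le> hh j + 2"
proof -
  obtain m r where mr: "j = 6*m + r" "r < 6" by (rule hh_cases)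
  note h0 = hh_shift[OF mr]
  show ?thesis
  proof (cases "r = 5")
    case True
    hence "j + 1 = 6*(m+1) + 0" using mr by simp
    from hh_shift[OF this] h0 True show ?thesis by simp
  next
    case False
    hence "j + 1 = 6*m + (r+1)" "r + 1 < 6" using mr by auto
    from hh_shift[OF this] h0 show ?thesis by (simp split: if_splits)
  qed
qed
lemma hh_step3: "hh (j+3) \<le> hh j + 3"
proof -
  obtain m r where mr: "j = 6*m + r" "r < 6" by (rule hh_cases)
  note h0 = hh_shift[OF mr]
  show ?thesis
  proof (cases "r \<ge> 3")
    case True
    hence "j + 3 = 6*(m+1) + (r-3)" "r - 3 < 6" using mr by auto
    from hh_shift[OF this] h0 True show ?thesis by (simp split: if_splits)
  next
    case False
    hence "j + 3 = 6*m + (r+3)" "r + 3 < 6" using mr by auto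
    from hh_shift[OF this] h0 False show ?thesis by (simp split: if_splits)
  qed
qed
lemma hh_bounds: "2*j \<le> 3 * hh j" "3 * hh j \<le> 2*j + 11"
proof -
  obtain m r where mr: "j = 6*m + r" "r < 6" by (rule hh_cases)
  note h0 = hh_shift[OF mr]
  show "2*j \<le> 3 * hh j" "3 * hh j \<le> 2*j + 11" using mr h0 by (simp_all split: if_splits)
qed
lemma hh0: "hh 0 = 0" unfolding hh_def by simp

lemma mem_repr:
  assumes "s \<in> gen_semigroup {a, 2*a + d, 3*a + 3*d, 4*a + 6*d}"
  shows "\<exists>c j. s = c*a + j*d \<and> hh j \<le> c"
  using assms
proof (induction rule: gen_semigroup.induct)
  case zero
  then show ?case by (rule exI[of _ 0], rule exI[of _ 0]) (simp add: hh0)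
next
  case (add s g)
  then obtain c j where cj: "s = c*a + j*d" "hh j \<le> c" by blast
  from add.hyps(2) show ?case
  proof (elim insertE)
    assume "g = a" thus ?thesis using cj
      by (intro exI[of _ "c+1"] exI[of _ j]) (simp add: algebra_simps)
  next
    assume "g = 2*a+d" thus ?thesis using cj hh_step1[of j]
      by (intro exI[of _ "c+2"] exI[of _ "j+1"]) (simp add: algebra_simps)
  next
    assume "g = 3*a+3*d" thus ?thesis using cj hh_step3[of j]
      by (intro exI[of _ "c+3"] exI[of _ "j+3"]) (simp add: algebra_simps)
  next
    assume "g = 4*a+6*d" thus ?thesis using cj hh_step6[of j]
      by (intro exI[of _ "c+4"] exI[of _ "j+6"]) (simp add: algebra_simps)
  qed simp
qed

lemma add_mult_gen:
  assumes "s \<in> gen_semigroup G" "g \<in> G"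
  shows "s + k*g \<in> gen_semigroup G"
proof (induction k)
  case 0 then show ?case using assms by simp
next
  case (Suc k)
  have "s + Suc k * g = (s + k*g) + g" by simp
  then show ?case using Suc gen_semigroup.add[OF Suc assms(2)] by (simp add: add_ac)
qed

lemma repr_mem:
  assumes "hh j \<le> c"
  shows "c*a + j*d \<in> gen_semigroup {a, 2*a + d, 3*a + 3*d, 4*a + 6*d}"
proof -
  let ?G = "{a, 2*a + d, 3*a + 3*d, 4*a + 6*d}"
  define k1 where "k1 = (if j mod 6 \<ge> 3 then j mod 6 - 3 else j mod 6)"
  define k2 where "k2 = (if j mod 6 \<ge> 3 then 1 else (0::nat))"
  define m where "m = j div 6"
  have hj: "hh j = 4*m + 3*k2 + 2*k1" unfolding hh_def k1_def k2_def m_def by simp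
  have jj: "j = 6*m + 3*k2 + k1" unfolding k1_def k2_def m_def by auto
  have e: "c*a + j*d = (((0 + (c - hh j)*a) + k1*(2*a+d)) + k2*(3*a+3*d)) + m*(4*a+6*d)"
  proof -
    obtain e where c: "c = hh j + e" using assms le_Suc_ex by blast
    have jd: "j*d = (6*m + 3*k2 + k1)*d" using jj by simp
    show ?thesis unfolding c jd by (simp add: hj algebra_simps)
  qed
  have "0 \<in> gen_semigroup ?G" by (rule gen_semigroup.zero)
  hence "0 + (c - hh j)*a \<in> gen_semigroup ?G" by (rule add_mult_gen) simp
  hence "(0 + (c - hh j)*a) + k1*(2*a+d) \<in> gen_semigroup ?G" by (rule add_mult_gen) simp
  hence "((0 + (c - hh j)*a) + k1*(2*a+d)) + k2*(3*a+3*d) \<in> gen_semigroup ?G" by (rule add_mult_gen) simp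
  hence "(((0 + (c - hh j)*a) + k1*(2*a+d)) + k2*(3*a+3*d)) + m*(4*a+6*d) \<in> gen_semigroup ?G" by (rule add_mult_gen) simp
  thus ?thesis using e by simp
qed

theorem theorem2p2:
  fixes a d :: nat
  assumes "d > 0" and "a \<ge> 7" and "gcd a d = 1"
  shows "apery (gen_semigroup {a, 2*a + d, 3*a + 3*d, 4*a + 6*d}) a =
    {0} \<union> {(4 * (i div 6) + 3 * (if i mod 6 \<ge> 3 then 1 else 0)
              + 2 * (if i mod 6 \<ge> 3 then i mod 6 - 3 else i mod 6)) * a + i * d
           | i. 1 \<le> i \<and> i \<le> a - 1}"
proof -
  let ?S = "gen_semigroup {a, 2*a + d, 3*a + 3*d, 4*a + 6*d}"
  have R: "{(4 * (i div 6) + 3 * (if i mod 6 \<ge> 3 then 1 else 0)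
              + 2 * (if i mod 6 \<ge> 3 then i mod 6 - 3 else i mod 6)) * a + i * d
           | i. 1 \<le> i \<and> i \<le> a - 1} = {hh i * a + i*d | i. 1 \<le> i \<and> i \<le> a - 1}"
    unfolding hh_def by simp
  have sub: "apery ?S a \<subseteq> {0} \<union> {hh i * a + i*d | i. 1 \<le> i \<and> i \<le> a - 1}"
  proof
    fix s assume "s \<in> apery ?S a"
    hence sS: "s \<in> ?S" and nS: "\<not> (s \<ge> a \<and> s - a \<in> ?S)" unfolding apery_def by auto
    obtain c j where cj: "s = c*a + j*d" "hh j \<le> c" using mem_repr[OF sS] by blast
    have c: "c = hh j"
    proof (rule ccontr)
      assume "c \<noteq> hh j"
      then obtain c' where c': "c = Suc c'" "hh j \<le> c'" using cj(2)
        by (metis le_SucE le_SucI less_imp_Suc_add not_less_eq_eq order.not_eq_order_implies_strict)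
      have "s - a = c'*a + j*d" using cj c' by simp
      moreover have "s \<ge> a" using cj c' by simp
      ultimately show False using nS repr_mem[OF c'(2), of a d] by simp
    qed
    have ja: "j < a"
    proof (rule ccontr)
      assume "\<not> j < a"
      then obtain j' where j': "j = a + j'" using le_Suc_ex not_less by blast
      have b1: "2*j \<le> 3*hh j" "3 * hh j' \<le> 2*j' + 11" using hh_bounds by auto
      have "hh j' + 1 \<le> hh j" using b1 j' assms(2) by linarith
      then obtain m where m: "hh j = Suc m" "hh j' \<le> m" by (cases "hh j") auto
      have "s = Suc m * a + (a + j')*d" using cj c m j' by simp
      hence "s - a = (m + d)*a + j'*d" "s \<ge> a" by (simp_all add: algebra_simps)
      moreover have "hh j' \<le> m + d" using m by simp
      ultimately show False using nS repr_mem[of j' "m+d" a d] by simp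
    qed
    show "s \<in> {0} \<union> {hh i * a + i*d | i. 1 \<le> i \<and> i \<le> a - 1}"
    proof (cases "j = 0")
      case True then show ?thesis using cj c by (simp add: hh0)
    next
      case False then show ?thesis using cj c ja by auto
    qed
  qed
  have sup: "{0} \<union> {hh i * a + i*d | i. 1 \<le> i \<and> i \<le> a - 1} \<subseteq> apery ?S a"
  proof
    fix s assume "s \<in> {0} \<union> {hh i * a + i*d | i. 1 \<le> i \<and> i \<le> a - 1}"
    then consider "s = 0" | i where "s = hh i * a + i*d" "1 \<le> i" "i \<le> a - 1" by blast
    then show "s \<in> apery ?S a"
    proof cases
      case 1 then show ?thesis using assms(2) gen_semigroup.zero unfolding apery_def by auto
    next
      case 2
      have sS: "s \<in> ?S" using repr_mem[of i "hh i" a d] 2 by simp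
      have "\<not> (s \<ge> a \<and> s - a \<in> ?S)"
      proof
        assume H: "s \<ge> a \<and> s - a \<in> ?S"
        then obtain n j where nj: "s - a = n*a + j*d" "hh j \<le> n" using mem_repr by blast
        have eq: "hh i * a + i*d = (n+1)*a + j*d"
        proof -
          have "s - a = n*a + j*d" "a \<le> s" using nj H by auto
          hence "s = a + (n*a + j*d)" by linarith
          thus ?thesis using 2 by (simp add: algebra_simps)
        qed
        have "int a dvd (int j - int i) * int d"
        proof -
          have "(int j - int i) * int d = int a * (int (hh i) - int n - 1)"
            using arg_cong[OF eq, of int] by (simp add: algebra_simps)
          thus ?thesis by simp
        qed
        moreover have "coprime (int a) (int d)" using assms(3)
          by (simp add: coprime_iff_gcd_eq_1)
        ultimately have "int a dvd (int j - int i)"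
          using coprime_dvd_mult_left_iff by blast
        hence "int j mod int a = int i mod int a" by (simp add: mod_eq_dvd_iff)
        hence jm: "j mod a = i" using 2 assms(2)
          by (metis le_diff_conv2 less_Suc_eq_le mod_less Suc_leI add_le_imp_le_left le_add_diff_inverse nat_int of_nat_mod one_le_numeral order_trans plus_1_eq_Suc)
        show False
        proof (cases "j < a")
          case True
          hence "j = i" using jm by simp
          hence "hh i * a = (n+1) * a" using eq by simp
          hence "hh i = n+1" using assms(2) by (metis mult_right_cancel not_numeral_le_zero le0 le_antisym)
          thus False using nj(2) \<open>j = i\<close> by simp
        next
          case False
          have "j = a * (j div a) + i" using jm by (metis div_mult_mod_eq mult.commute)
          moreover have "j div a \<ge> 1" using False assms(2) using div_greater_zero_iff[of j a] by linarith
          ultimately have ji: "j \<ge> a + i" by (metis add_le_mono1 mult.right_neutral mult_le_mono2)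
          have "i*d \<le> j*d" using ji by simp
          hence "(n+1)*a \<le> hh i * a" using eq by linarith
          hence "n + 1 \<le> hh i" using assms(2) mult_le_cancel2[of "n+1" a "hh i"] by simp
          moreover have "2*j \<le> 3*hh j" "3 * hh i \<le> 2*i + 11" using hh_bounds by auto
          ultimately show False using nj(2) ji assms(2) by linarith
        qed
      qed
      then show ?thesis using sS unfolding apery_def by simp
    qed
  qed
  show ?thesis using sub sup R by blast
qed

end
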